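(* Let $n\ge 2$ and let $m,p,k$ be integers with $1\le m\le p\le k\le n$ and $p\le n-1$. Then the number of $\alpha\in\mathcal{OCT}_n$ with $h(\alpha)=p$, $f(\alpha)=m$ and $w^+(\alpha)=k$ is $$F(n;p,m,k)=\binom{n-m-1}{n-p-1}.$$
   Context: $X_n=\{1,2,\dots,n\}$ with its usual order; maps are written on the right ($x\alpha$). A map $\alpha:X_n\to X_n$ is order-preserving if $x\le y$ implies $x\alpha\le y\alpha$, and a contraction if $|x\alpha-y\alpha|\le|x-y|$ for all $x,y$. $\mathcal{OCT}_n$ is the set of all order-preserving contractions $X_n\to X_n$ (defined on all of $X_n$). For such $\alpha$: height $h(\alpha)=|\mathrm{Im}\,\alpha|$; right waist $w^+(\alpha)=\max(\mathrm{Im}\,\alpha)$; fix $f(\alpha)=|F(\alpha)|$ where $F(\alpha)=\{x\in X_n:x\alpha=x\}$. *)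

theory Defs
  imports Main
begin

text \<open>Full transformations of X_n = {1..n}, represented as functions nat => nat
  that are 0 outside {1..n} (so that distinct maps are distinct functions).\<close>

definition OCT :: "nat \<Rightarrow> (nat \<Rightarrow> nat) set" where
  "OCT n = {a. (\<forall>x\<in>{1..n}. a x \<in> {1..n})
             \<and> (\<forall>x. x \<notin> {1..n} \<longrightarrow> a x = 0)
             \<and> (\<forall>x\<in>{1..n}. \<forall>y\<in>{1..n}. x \<le> y \<longrightarrow> a x \<le> a y)
             \<and> (\<forall>x\<in>{1..n}. \<forall>y\<in>{1..n}.
                   \<bar>int (a x) - int (a y)\<bar> \<le> \<bar>int x - int y\<bar>)}"

definition height :: "nat \<Rightarrow> (nat \<Rightarrow> nat) \<Rightarrow> nat" where
  "height n a = card (a ` {1..n})"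

definition right_waist :: "nat \<Rightarrow> (nat \<Rightarrow> nat) \<Rightarrow> nat" where
  "right_waist n a = Max (a ` {1..n})"

definition fixset :: "nat \<Rightarrow> (nat \<Rightarrow> nat) \<Rightarrow> nat set" where
  "fixset n a = {x\<in>{1..n}. a x = x}"

definition fix_num :: "nat \<Rightarrow> (nat \<Rightarrow> nat) \<Rightarrow> nat" where
  "fix_num n a = card (fixset n a)"

end

theory Submission imports Defs begin

definition nt :: "bool list \<Rightarrow> nat" where "nt w = length (filter id w)"
definition nf :: "bool list \<Rightarrow> nat" where "nf w = length (filter Not w)"

fun fc :: "int \<Rightarrow> bool list \<Rightarrow> nat" where
  "fc d [] = (if d = 0 then 1 else 0)"
| "fc d (s#w) = (if d = 0 then 1 else 0) + fc (if s then d else d - 1) w"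

lemma nt_simps[simp]: "nt [] = 0" "nt (s#w) = (if s then Suc (nt w) else nt w)"
  by (auto simp: nt_def)
lemma nf_simps[simp]: "nf [] = 0" "nf (s#w) = (if s then nf w else Suc (nf w))"
  by (auto simp: nf_def)
lemma nt_nf: "nt w + nf w = length w"
  by (induct w) auto

lemma fin_words: "finite {w :: bool list. length w = L \<and> P w}"
proof -
  have "finite {xs :: bool list. set xs \<subseteq> UNIV \<and> length xs = L}"
    by (rule finite_lists_length_eq) simp
  then show ?thesis by (rule finite_subset[rotated]) auto
qed

lemma card_split:
  "card {w. length w = Suc L \<and> P w} =
   card {w. length w = L \<and> P (True#w)} + card {w. length w = L \<and> P (False#w)}"
proof -
  have "{w. length w = Suc L \<and> P w} =
        Cons True ` {w. length w = L \<and> P (True#w)} \<union> Cons False ` {w. length w = L \<and> P (False#w)}"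
    (is "?l = ?r")
  proof
    show "?l \<subseteq> ?r"
    proof
      fix w assume "w \<in> ?l"
      then obtain s v where "w = s # v" "length v = L" "P (s#v)"
        by (cases w) auto
      then show "w \<in> ?r" by (cases s) auto
    qed
  qed auto
  moreover have "card (Cons True ` {w. length w = L \<and> P (True#w)}) = card {w. length w = L \<and> P (True#w)}"
    by (rule card_image) (simp add: inj_on_def)
  moreover have "card (Cons False ` {w. length w = L \<and> P (False#w)}) = card {w. length w = L \<and> P (False#w)}"
    by (rule card_image) (simp add: inj_on_def)
  moreover have "card (Cons True ` {w. length w = L \<and> P (True#w)} \<union> Cons False ` {w. length w = L \<and> P (False#w)})
     = card (Cons True ` {w. length w = L \<and> P (True#w)}) + card (Cons False ` {w. length w = L \<and> P (False#w)})"
    by (rule card_Un_disjoint) (auto simp: fin_words)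
  ultimately show ?thesis by simp
qed

lemma fc_neg: "d < 0 \<Longrightarrow> fc d w = 0"
  by (induct w arbitrary: d) auto

lemma fc_0_pos: "fc 0 w \<ge> 1"
  by (cases w) auto

lemma count_nt: "card {w. length w = L \<and> nt w = t} = L choose t"
proof (induct L arbitrary: t)
  case 0
  have "{w::bool list. length w = 0 \<and> nt w = t} = (if t = 0 then {[]} else {})" by auto
  then show ?case by (cases t) auto
next
  case (Suc L)
  have e: "card {w. length w = Suc L \<and> nt w = t} = card {w. length w = L \<and> nt (True#w) = t} + card {w. length w = L \<and> nt (False#w) = t}" by (rule card_split)
  show ?case
  proof (cases t)
    case 0
    have "{w. length w = L \<and> nt (True # w) = t} = {}" using 0 by auto
    moreover have "{w. length w = L \<and> nt (False # w) = t} = {w. length w = L \<and> nt w = t}" by auto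
    ultimately show ?thesis using Suc.hyps[of t] 0 e by simp
  next
    case (Suc t')
    have "{w. length w = L \<and> nt (True # w) = t} = {w. length w = L \<and> nt w = t'}" using Suc by auto
    moreover have "{w. length w = L \<and> nt (False # w) = t} = {w. length w = L \<and> nt w = t}" by auto
    ultimately show ?thesis using Suc.hyps[of t] Suc.hyps[of t'] Suc e by simp
  qed
qed

lemma count_fc:
  "0 \<le> d \<Longrightarrow> d + int t \<le> int L \<Longrightarrow> 1 \<le> m \<Longrightarrow>
   card {w. length w = L \<and> nt w = t \<and> fc d w = m} = (if m \<le> t+1 then (L-m) choose (t+1-m) else 0)"
proof (induct L arbitrary: d t m)
  case 0
  then have "d = 0" "t = 0" by auto
  then have "{w::bool list. length w = 0 \<and> nt w = t \<and> fc d w = m} = (if m = 1 then {[]} else {})" by auto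
  then show ?case using 0 by auto
next
  case (Suc L)
  have e: "card {w. length w = Suc L \<and> nt w = t \<and> fc d w = m} =
     card {w. length w = L \<and> nt (True#w) = t \<and> fc d (True#w) = m} +
     card {w. length w = L \<and> nt (False#w) = t \<and> fc d (False#w) = m}"
    by (rule card_split)
  show ?case
  proof (cases "d = 0")
    case True
    have F: "{w. length w = L \<and> nt (False#w) = t \<and> fc d (False#w) = m} =
          (if m = 1 then {w. length w = L \<and> nt w = t} else {})"
      using True by (auto simp: fc_neg)
    show ?thesis
    proof (cases "m = 1")
      case m1: True
      have "{w. length w = L \<and> nt (True#w) = t \<and> fc d (True#w) = m} = {}"
        using True m1 fc_0_pos by (auto simp del: fc.simps simp: fc.simps(2)) (metis Suc_le_eq)
      then have c1: "card {w. length w = L \<and> nt (True#w) = t \<and> fc d (True#w) = m} = 0" by (metis card.empty)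
      have c2: "card {w. length w = L \<and> nt (False#w) = t \<and> fc d (False#w) = m} = L choose t"
        unfolding F using m1 count_nt[of L t] by simp
      show ?thesis unfolding e c1 c2 using m1 by simp
    next
      case m1: False
      have c2: "card {w. length w = L \<and> nt (False#w) = t \<and> fc d (False#w) = m} = 0"
        unfolding F using m1 by simp
      show ?thesis
      proof (cases t)
        case 0
        have "{w. length w = L \<and> nt (True#w) = t \<and> fc d (True#w) = m} = {}"
          using 0 by auto
        then have c1: "card {w. length w = L \<and> nt (True#w) = t \<and> fc d (True#w) = m} = 0" by (metis card.empty)
        show ?thesis unfolding e c1 c2 using m1 0 Suc.prems by simp
      next
        case (Suc t')
        have "{w. length w = L \<and> nt (True#w) = t \<and> fc d (True#w) = m} =
              {w. length w = L \<and> nt w = t' \<and> fc 0 w = m - 1}"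
          using Suc True m1 Suc.prems by auto
        moreover have "card {w. length w = L \<and> nt w = t' \<and> fc 0 w = m - 1} =
            (if m - 1 \<le> t'+1 then (L-(m-1)) choose (t'+1-(m-1)) else 0)"
          using Suc.hyps[of 0 t' "m-1"] Suc.prems Suc m1 by simp
        ultimately have c1: "card {w. length w = L \<and> nt (True#w) = t \<and> fc d (True#w) = m} =
            (if m - 1 \<le> t'+1 then (L-(m-1)) choose (t'+1-(m-1)) else 0)" by simp
        show ?thesis unfolding e c1 c2 using m1 Suc Suc.prems
          by (cases "m \<le> Suc t") (auto simp: Suc_diff_le)
      qed
    qed
  next
    case False
    with Suc.prems have dpos: "d > 0" by simp
    have F: "{w. length w = L \<and> nt (False#w) = t \<and> fc d (False#w) = m} =
          {w. length w = L \<and> nt w = t \<and> fc (d-1) w = m}"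
      using False by auto
    have FC: "card {w. length w = L \<and> nt w = t \<and> fc (d-1) w = m} =
        (if m \<le> t+1 then (L-m) choose (t+1-m) else 0)"
      using Suc.hyps[of "d-1" t m] Suc.prems dpos by simp
    have c2: "card {w. length w = L \<and> nt (False#w) = t \<and> fc d (False#w) = m} =
        (if m \<le> t+1 then (L-m) choose (t+1-m) else 0)" unfolding F using FC by simp
    show ?thesis
    proof (cases t)
      case 0
      have "{w. length w = L \<and> nt (True#w) = t \<and> fc d (True#w) = m} = {}"
        using 0 by auto
      then have c1: "card {w. length w = L \<and> nt (True#w) = t \<and> fc d (True#w) = m} = 0" by (metis card.empty)
      show ?thesis unfolding e c1 c2 using 0 Suc.prems by auto
    next
      case (Suc t')
      have "{w. length w = L \<and> nt (True#w) = t \<and> fc d (True#w) = m} =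
              {w. length w = L \<and> nt w = t' \<and> fc d w = m}"
        using Suc False by auto
      moreover have T: "card {w. length w = L \<and> nt w = t' \<and> fc d w = m} =
            (if m \<le> t'+1 then (L-m) choose (t'+1-m) else 0)"
        using Suc.hyps[of d t' m] Suc.prems Suc by simp
      ultimately have c1: "card {w. length w = L \<and> nt (True#w) = t \<and> fc d (True#w) = m} =
            (if m \<le> t'+1 then (L-m) choose (t'+1-m) else 0)" by simp
      have "t \<le> L" using Suc.prems dpos by simp
      then show ?thesis unfolding e c1 c2 using Suc Suc.prems
        by (cases "m \<le> t'+1") (auto simp: Suc_diff_le)
    qed
  qed
qed

lemma fc_card: "fc d w = card {i. i \<le> length w \<and> d = int (nf (take i w))}"
proof (induct w arbitrary: d)
  case Nil
  have "{i. i \<le> length ([]::bool list) \<and> d = int (nf (take i []))} = (if d = 0 then {0} else {})" by auto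
  then show ?case by simp
next
  case (Cons s w)
  let ?d' = "if s then d else d - 1"
  have "{i. i \<le> length (s#w) \<and> d = int (nf (take i (s#w)))} =
        (if d = 0 then {0} else {}) \<union> Suc ` {j. j \<le> length w \<and> ?d' = int (nf (take j w))}"
    (is "?l = ?r")
  proof
    show "?l \<subseteq> ?r"
    proof
      fix i assume "i \<in> ?l"
      then show "i \<in> ?r" by (cases i) (auto split: if_splits)
    qed
  qed (auto split: if_splits)
  moreover have "card ?r = (if d = 0 then 1 else 0) + card {j. j \<le> length w \<and> ?d' = int (nf (take j w))}"
    by (subst card_Un_disjoint) (auto simp: card_image)
  ultimately show ?case using Cons[of ?d'] by simp
qed

lemma nt_append[simp]: "nt (xs @ ys) = nt xs + nt ys" by (simp add: nt_def)
lemma nt_le_length: "nt xs \<le> length xs" by (simp add: nt_def)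

lemma take_nt_mono: "i \<le> j \<Longrightarrow> nt (take i w) \<le> nt (take j w)"
  using take_add[of i "j-i" w] by simp

lemma take_nt_lip: "i \<le> j \<Longrightarrow> nt (take j w) + i \<le> nt (take i w) + j"
  using take_add[of i "j-i" w] nt_le_length[of "take (j-i) (drop i w)"] by (simp, linarith)

lemma nt_take_le: "nt (take i w) \<le> nt w"
  using take_nt_mono[of i "length w" w] by (cases "i \<le> length w") auto

lemma nt_ivt: "t \<le> nt w \<Longrightarrow> \<exists>i \<le> length w. nt (take i w) = t"
proof (induct w arbitrary: t)
  case Nil then show ?case by simp
next
  case (Cons s w)
  show ?case
  proof (cases t)
    case 0 then show ?thesis by (intro exI[of _ 0]) simp
  next
    case (Suc t')
    show ?thesis
    proof (cases s)
      case True
      with Cons.prems Suc obtain i where "i \<le> length w" "nt (take i w) = t'"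
        using Cons.hyps[of t'] by auto
      then show ?thesis using True Suc by (intro exI[of _ "Suc i"]) simp
    next
      case False
      with Cons.prems Suc obtain i where "i \<le> length w" "nt (take i w) = t"
        using Cons.hyps[of t] by auto
      then show ?thesis using False by (intro exI[of _ "Suc i"]) simp
    qed
  qed
qed

definition Am :: "nat \<Rightarrow> nat \<Rightarrow> bool list \<Rightarrow> nat \<Rightarrow> nat" where
  "Am n c w x = (if x \<in> {1..n} then c + nt (take (x-1) w) else 0)"

lemma Am_OCT:
  assumes "length w = n - 1" "1 \<le> c" "c + nt w \<le> n"
  shows "Am n c w \<in> OCT n"
proof -
  have v: "Am n c w x \<in> {1..n}" if "x \<in> {1..n}" for x
    using that assms nt_take_le[of "x-1" w] by (auto simp: Am_def)
  have mo: "Am n c w x \<le> Am n c w y" if "x \<in> {1..n}" "y \<in> {1..n}" "x \<le> y" for x y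
    using that take_nt_mono[of "x-1" "y-1" w] by (auto simp: Am_def)
  have li: "Am n c w y + x \<le> Am n c w x + y" if "x \<in> {1..n}" "y \<in> {1..n}" "x \<le> y" for x y
  proof -
    obtain x' where x': "x = Suc x'" using \<open>x \<in> {1..n}\<close> by (cases x) auto
    obtain y' where y': "y = Suc y'" using \<open>y \<in> {1..n}\<close> by (cases y) auto
    note xy = x' y'
    then have "nt (take y' w) + x' \<le> nt (take x' w) + y'" using that by (intro take_nt_lip) simp
    then show ?thesis using that xy by (simp add: Am_def)
  qed
  have "\<bar>int (Am n c w x) - int (Am n c w y)\<bar> \<le> \<bar>int x - int y\<bar>" if "x \<in> {1..n}" "y \<in> {1..n}" for x y
  proof (cases "x \<le> y")
    case True
    then show ?thesis using mo[OF that True] li[OF that True] by linarith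
  next
    case False
    then have "y \<le> x" by simp
    then show ?thesis using mo[of y x] li[of y x] that by linarith
  qed
  then show ?thesis using v mo unfolding OCT_def by (auto simp: Am_def)
qed

lemma Am_image:
  assumes "1 \<le> n" "length w = n - 1"
  shows "Am n c w ` {1..n} = {c..c + nt w}"
proof
  show "Am n c w ` {1..n} \<subseteq> {c..c + nt w}"
    using nt_take_le by (auto simp: Am_def)
  show "{c..c + nt w} \<subseteq> Am n c w ` {1..n}"
  proof
    fix v assume "v \<in> {c..c + nt w}"
    then have "v - c \<le> nt w" by auto
    then obtain i where i: "i \<le> length w" "nt (take i w) = v - c"
      using nt_ivt[of "v - c" w] by blast
    then have "Am n c w (Suc i) = v" "Suc i \<in> {1..n}" using assms \<open>v \<in> _\<close> by (auto simp: Am_def)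
    then show "v \<in> Am n c w ` {1..n}" by (metis image_eqI)
  qed
qed

lemma Am_height: assumes "1 \<le> n" "length w = n - 1" shows "height n (Am n c w) = nt w + 1"
  unfolding height_def Am_image[OF assms] by simp

lemma Am_rw: assumes "1 \<le> n" "length w = n - 1" shows "right_waist n (Am n c w) = c + nt w"
  unfolding right_waist_def Am_image[OF assms] by (rule Max_eqI) auto

lemma Am_fix:
  assumes "length w = n - 1" "1 \<le> c" "1 \<le> n"
  shows "fix_num n (Am n c w) = fc (int c - 1) w"
proof -
  have "fixset n (Am n c w) = Suc ` {i. i \<le> length w \<and> int c - 1 = int (nf (take i w))}"
    (is "?l = ?r")
  proof
    show "?l \<subseteq> ?r"
    proof
      fix x assume x: "x \<in> ?l"
      then obtain i where xi: "x = Suc i" "i \<le> length w" using assms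
        by (cases x) (auto simp: fixset_def)
      then have s: "nt (take i w) + nf (take i w) = i" using nt_nf[of "take i w"] by simp
      have "Suc i \<in> {1..n}" using xi assms by simp
      then have "Am n c w (Suc i) = c + nt (take i w)" by (simp add: Am_def)
      moreover have "Am n c w x = x" using x by (simp add: fixset_def)
      ultimately have "c + nt (take i w) = Suc i" using xi by simp
      then have "c = Suc (nf (take i w))" using s by linarith
      then have "int c - 1 = int (nf (take i w))" by simp
      then show "x \<in> ?r" using xi by blast
    qed
    show "?r \<subseteq> ?l"
    proof
      fix x assume "x \<in> ?r"
      then obtain i where xi: "x = Suc i" "i \<le> length w" "int c - 1 = int (nf (take i w))" by auto
      then have s: "nt (take i w) + nf (take i w) = i" using nt_nf[of "take i w"] by simp
      have xin: "Suc i \<in> {1..n}" using xi assms by simp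
      then have "Am n c w (Suc i) = c + nt (take i w)" by (simp add: Am_def)
      moreover have "c = Suc (nf (take i w))" using xi(3) assms by linarith
      ultimately have "Am n c w (Suc i) = Suc i" using s by simp
      then show "x \<in> ?l" using xi xin by (simp add: fixset_def)
    qed
  qed
  then show ?thesis by (simp add: fix_num_def card_image fc_card)
qed

lemma Am_inj: assumes n: "1 \<le> n" shows "inj_on (Am n c) {w. length w = n - 1}"
proof (rule inj_onI)
  fix w1 w2 assume w1: "w1 \<in> {w. length w = n - 1}" and w2: "w2 \<in> {w. length w = n - 1}"
    and eq: "Am n c w1 = Am n c w2"
  have t: "nt (take j w1) = nt (take j w2)" if "j \<le> n - 1" for j
  proof -
    have "Suc j \<in> {1..n}" using that n by simp
    then show ?thesis using fun_cong[OF eq, of "Suc j"] by (simp add: Am_def)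
  qed
  have "w1 ! i = w2 ! i" if "i < n - 1" for i
  proof -
    have "take (Suc i) w1 = take i w1 @ [w1 ! i]" "take (Suc i) w2 = take i w2 @ [w2 ! i]"
      using that w1 w2 by (simp_all add: take_Suc_conv_app_nth)
    moreover have "nt (take (Suc i) w1) = nt (take (Suc i) w2)" "nt (take i w1) = nt (take i w2)"
      using t[of i] t[of "Suc i"] that by simp_all
    ultimately show ?thesis by (cases "w1 ! i"; cases "w2 ! i") simp_all
  qed
  then show "w1 = w2" using w1 w2 by (auto intro: nth_equalityI)
qed

lemma OCT_rep:
  assumes a: "a \<in> OCT n" and n: "1 \<le> n"
  shows "a = Am n (a 1) (map (\<lambda>x. a (Suc x) \<noteq> a x) [1..<n])"
proof -
  let ?W = "map (\<lambda>x. a (Suc x) \<noteq> a x) [1..<n]"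
  have step: "a (Suc x) = a x \<or> a (Suc x) = Suc (a x)" if "1 \<le> x" "x < n" for x
  proof -
    have m: "a x \<le> a (Suc x)" using a that unfolding OCT_def by auto
    have "x \<in> {1..n}" "Suc x \<in> {1..n}" using that by auto
    moreover have "\<forall>x\<in>{1..n}. \<forall>y\<in>{1..n}. \<bar>int (a x) - int (a y)\<bar> \<le> \<bar>int x - int y\<bar>"
      using a unfolding OCT_def by blast
    ultimately have "\<bar>int (a x) - int (a (Suc x))\<bar> \<le> \<bar>int x - int (Suc x)\<bar>" by blast
    then show ?thesis using m by linarith
  qed
  have r: "i < n \<Longrightarrow> a (Suc i) = a 1 + nt (take i ?W)" for i
  proof (induct i)
    case 0 then show ?case by simp
  next
    case (Suc i)
    have "take (Suc i) ?W = take i ?W @ [?W ! i]"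
      using Suc.prems by (simp add: take_Suc_conv_app_nth)
    moreover have u: "[1..<n] ! i = Suc i" using Suc.prems by simp
    have "i < length [1..<n]" using Suc.prems by simp
    then have "?W ! i = (\<lambda>x. a (Suc x) \<noteq> a x) ([1..<n] ! i)" by (rule nth_map)
    then have "?W ! i = (a (Suc (Suc i)) \<noteq> a (Suc i))" by (simp only: u)
    moreover note this
    ultimately show ?case using Suc step[of "Suc i"] by (auto simp: nt_def)
  qed
  show ?thesis
  proof
    fix x
    show "a x = Am n (a 1) ?W x"
    proof (cases "x \<in> {1..n}")
      case True
      then obtain i where "x = Suc i" "i < n" by (cases x) auto
      then show ?thesis using r[of i] True by (simp add: Am_def)
    next
      case False
      then show ?thesis using a unfolding Am_def OCT_def by auto
    qed
  qed
qed

theorem proposition2p3: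
  fixes n m p k :: nat
  assumes "n \<ge> 2" and "1 \<le> m" and "m \<le> p" and "p \<le> k" and "k \<le> n" and "p \<le> n - 1"
  shows "card {a \<in> OCT n. height n a = p \<and> fix_num n a = m \<and> right_waist n a = k}
           = (n - m - 1) choose (n - p - 1)"
proof -
  define c where "c = k - p + 1"
  define W where "W = {w. length w = n - 1 \<and> nt w = p - 1 \<and> fc (int c - 1) w = m}"
  have n1: "1 \<le> n" using assms by simp
  have "{a \<in> OCT n. height n a = p \<and> fix_num n a = m \<and> right_waist n a = k} = Am n c ` W"
    (is "?S = _")
  proof
    show "Am n c ` W \<subseteq> ?S"
    proof
      fix a assume "a \<in> Am n c ` W"
      then obtain w where w: "w \<in> W" "a = Am n c w" by auto
      have l: "length w = n - 1" "nt w = p - 1" "fc (int c - 1) w = m" using w(1) by (auto simp: W_def)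
      have c1: "1 \<le> c" "c + nt w = k" using l assms by (auto simp: c_def)
      show "a \<in> ?S" using Am_OCT[OF l(1) c1(1)] Am_height[OF n1 l(1)] Am_rw[OF n1 l(1)]
          Am_fix[OF l(1) c1(1) n1] c1 l assms w(2) by auto
    qed
    show "?S \<subseteq> Am n c ` W"
    proof
      fix a assume a: "a \<in> ?S"
      define w where "w = map (\<lambda>x. a (Suc x) \<noteq> a x) [1..<n]"
      have rep: "a = Am n (a 1) w" using OCT_rep[of a n] a n1 by (simp add: w_def)
      have lw: "length w = n - 1" by (simp add: w_def)
      have a1: "1 \<le> a 1" using a n1 unfolding OCT_def by auto
      have h: "nt w + 1 = p" using Am_height[OF n1 lw, of "a 1"] a rep by simp
      have r: "a 1 + nt w = k" using Am_rw[OF n1 lw, of "a 1"] a rep by simp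
      have ac: "a 1 = c" using h[symmetric] r[symmetric] a1 unfolding c_def by simp
      have f: "fc (int c - 1) w = m" using Am_fix[OF lw a1 n1] a rep ac by simp
      have "w \<in> W" using lw h f by (auto simp: W_def)
      then show "a \<in> Am n c ` W" using rep ac by auto
    qed
  qed
  moreover have "inj_on (Am n c) W"
    by (rule inj_on_subset[OF Am_inj[OF n1]]) (auto simp: W_def)
  ultimately have "card ?S = card W" by (simp add: card_image)
  also have "card W = (if m \<le> (p-1)+1 then (n-1-m) choose ((p-1)+1-m) else 0)"
    unfolding W_def using assms by (intro count_fc) (auto simp: c_def)
  also have "\<dots> = (n - m - 1) choose (p - m)" using assms by simp
  also have "\<dots> = (n - m - 1) choose (n - p - 1)"
    using binomial_symmetric[of "p - m" "n - m - 1"] assms by simp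
  finally show ?thesis .
qed

end
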